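(* Let $q \geq 5$ be a prime power and let $\mathcal{X}$ be a plane curve of degree $q-1$ defined over $\mathbb{F}_q$ without $\mathbb{F}_q$-linear components with $\mathrm{N}_q(\mathcal{X}) = (q-1)^2$. Suppose $Q \in Z(\mathcal{X})$ is a point with $r = \psi_{q-1}(Q) \geq 2$, and let $l_1,\dots,l_r$ be the $\mathbb{F}_q$-lines through $Q$ containing exactly $q-1$ points of $\mathcal{X}(\mathbb{F}_q)$. Then the set $\bigcup_{i=1}^r \big((l_i(\mathbb{F}_q)\setminus\{Q\}) \cap Z(\mathcal{X})\big)$ is contained in a line.
   Context: $\mathcal{X}(\mathbb{F}_q)=\mathcal{X}\cap\mathbb{P}^2(\mathbb{F}_q)$, $\mathrm{N}_q(\mathcal{X})=\#\mathcal{X}(\mathbb{F}_q)$; "without $\mathbb{F}_q$-linear components" means no line defined over $\mathbb{F}_q$ is a component. $Z(\mathcal{X}) := \mathbb{P}^2(\mathbb{F}_q)\setminus\mathcal{X}(\mathbb{F}_q)$. For a point $P\in\mathbb{P}^2(\mathbb{F}_q)$ and $0\le i\le q+1$, $\psi_i(P)$ is the number of $\mathbb{F}_q$-lines $l$ through $P$ with $\#(l\cap\mathcal{X}(\mathbb{F}_q))=i$. *)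

theory Defs
  imports Main "HOL-Library.Poly_Mapping"
begin

text \<open>Polynomials in the three variables X_0, X_1, X_2 (= X, Y, Z) with coefficients
  in a field: finitely supported maps from monomials (exponent vectors) to coefficients.\<close>

type_synonym 'a mpoly3 = "(nat \<Rightarrow>\<^sub>0 nat) \<Rightarrow>\<^sub>0 'a"

definition var3 :: "nat \<Rightarrow> 'a::comm_ring_1 mpoly3" where
  "var3 i = Poly_Mapping.single (Poly_Mapping.single i 1) 1"

definition const3 :: "'a::comm_ring_1 \<Rightarrow> 'a mpoly3" where
  "const3 c = Poly_Mapping.single 0 c"

definition homog3 :: "nat \<Rightarrow> 'a::comm_ring_1 mpoly3 \<Rightarrow> bool" where
  "homog3 d F \<longleftrightarrow> F \<noteq> 0 \<and>
     (\<forall>m \<in> Poly_Mapping.keys F. Poly_Mapping.keys m \<subseteq> {0,1,2} \<and>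
        Poly_Mapping.lookup m 0 + Poly_Mapping.lookup m 1 + Poly_Mapping.lookup m 2 = d)"

definition eval3 :: "'a::comm_ring_1 mpoly3 \<Rightarrow> 'a \<times> 'a \<times> 'a \<Rightarrow> 'a" where
  "eval3 F p = (case p of (x, y, z) \<Rightarrow>
     (\<Sum>m \<in> Poly_Mapping.keys F. Poly_Mapping.lookup F m * x ^ Poly_Mapping.lookup m 0 * y ^ Poly_Mapping.lookup m 1 * z ^ Poly_Mapping.lookup m 2))"

text \<open>Points of P^2(F_q), represented by the normalized representative whose first
  nonzero coordinate is 1.\<close>
definition proj_points :: "('a::field \<times> 'a \<times> 'a) set" where
  "proj_points = {(x, y, z). (x = 1) \<or> (x = 0 \<and> y = 1) \<or> (x = 0 \<and> y = 0 \<and> z = 1)}"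

definition proj_line :: "'a::field \<Rightarrow> 'a \<Rightarrow> 'a \<Rightarrow> ('a \<times> 'a \<times> 'a) set" where
  "proj_line a b c = {(x, y, z) \<in> proj_points. a * x + b * y + c * z = 0}"

definition proj_lines :: "('a::field \<times> 'a \<times> 'a) set set" where
  "proj_lines = {proj_line a b c | a b c. (a, b, c) \<noteq> (0, 0, 0)}"

definition rat_points :: "'a::field mpoly3 \<Rightarrow> ('a \<times> 'a \<times> 'a) set" where
  "rat_points F = {P \<in> proj_points. eval3 F P = 0}"

definition Zset :: "'a::field mpoly3 \<Rightarrow> ('a \<times> 'a \<times> 'a) set" where
  "Zset F = proj_points - rat_points F"

definition no_linear_components :: "'a::field mpoly3 \<Rightarrow> bool" where
  "no_linear_components F \<longleftrightarrow>
     (\<forall>a b c. (a, b, c) \<noteq> (0, 0, 0) \<longrightarrow>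
        \<not> (const3 a * var3 0 + const3 b * var3 1 + const3 c * var3 2) dvd F)"

definition psi :: "'a::field mpoly3 \<Rightarrow> nat \<Rightarrow> 'a \<times> 'a \<times> 'a \<Rightarrow> nat" where
  "psi F i P = card {l \<in> proj_lines. P \<in> l \<and> card (l \<inter> rat_points F) = i}"

end

theory Submission
  imports Defs "HOL-Computational_Algebra.Polynomial"
begin

lemma ff_pow:
  fixes x :: "'a::{field,finite}"
  assumes "x \<noteq> 0" shows "x ^ (card (UNIV::'a set) - 1) = 1"
proof -
  let ?U = "UNIV - {0::'a}"
  have bij: "bij_betw (\<lambda>y. x * y) ?U ?U"
    unfolding bij_betw_def inj_on_def using assms
    apply (auto simp: image_def)
    subgoal for z by (rule bexI[of _ "z / x"]) auto
    done
  have "(\<Prod>y\<in>?U. x * y) = (\<Prod>y\<in>?U. y)"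
    using prod.reindex_bij_betw[OF bij, of "\<lambda>y. y"] by simp
  moreover have "(\<Prod>y\<in>?U. x * y) = x ^ card ?U * (\<Prod>y\<in>?U. y)"
    by (simp add: prod.distrib)
  moreover have "card ?U = card (UNIV::'a set) - 1" by (simp add: card_Diff_subset)
  moreover have "(\<Prod>y\<in>?U. y) \<noteq> 0" by simp
  ultimately show ?thesis by simp
qed

lemma ff_char: "of_nat (card (UNIV::'a::{field,finite} set)) = (0::'a)"
proof -
  have bij: "bij_betw (\<lambda>y. y + 1) (UNIV::'a set) UNIV"
    unfolding bij_betw_def inj_on_def by (auto simp: image_def intro!: exI[of _ "_ - 1"])
  have "(\<Sum>y\<in>(UNIV::'a set). y + 1) = (\<Sum>y\<in>UNIV. y)"
    using sum.reindex_bij_betw[OF bij, of "\<lambda>y. y"] by simp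
  then show ?thesis by (simp add: sum.distrib)
qed

lemma cramer0:
  fixes qx qy qz px py pz sx sy sz :: "'a::comm_ring_1"
  defines "D \<equiv> qx*(py*sz - pz*sy) - qy*(px*sz - pz*sx) + qz*(px*sy - py*sx)"
  shows "(qy*pz-qz*py)*sx = (-(py*sz-pz*sy))*qx + (qy*sz-qz*sy)*px + D"
    "(qy*pz-qz*py)*sy = (-(py*sz-pz*sy))*qy + (qy*sz-qz*sy)*py"
    "(qy*pz-qz*py)*sz = (-(py*sz-pz*sy))*qz + (qy*sz-qz*sy)*pz"
  unfolding D_def by (simp_all add: algebra_simps)

lemma detn:
  fixes qx qy qz px py pz sx sy sz a b c :: "'a::comm_ring_1"
  defines "D \<equiv> qx*(py*sz - pz*sy) - qy*(px*sz - pz*sx) + qz*(px*sy - py*sx)"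
  shows "D*a = (py*sz-pz*sy)*(a*qx+b*qy+c*qz) + (sy*qz-sz*qy)*(a*px+b*py+c*pz) + (qy*pz-qz*py)*(a*sx+b*sy+c*sz)"
    "D*b = (pz*sx-px*sz)*(a*qx+b*qy+c*qz) + (sz*qx-sx*qz)*(a*px+b*py+c*pz) + (qz*px-qx*pz)*(a*sx+b*sy+c*sz)"
    "D*c = (px*sy-py*sx)*(a*qx+b*qy+c*qz) + (sx*qy-sy*qx)*(a*px+b*py+c*pz) + (qx*py-qy*px)*(a*sx+b*sy+c*sz)"
  unfolding D_def by (simp_all add: algebra_simps)

lemma span_w0:
  fixes q0 q1 q2 p0 p1 p2 s0 s1 s2 :: "'a::field"
  assumes D: "q0*(p1*s2 - p2*s1) - q1*(p0*s2 - p2*s0) + q2*(p0*s1 - p1*s0) = 0"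
    and w: "q1*p2-q2*p1 \<noteq> 0"
  shows "\<exists>\<alpha> \<beta>. s0 = \<alpha>*q0 + \<beta>*p0 \<and> s1 = \<alpha>*q1 + \<beta>*p1 \<and> s2 = \<alpha>*q2 + \<beta>*p2"
proof -
  define w where "w = q1*p2-q2*p1"
  define A where "A = -(p1*s2-p2*s1)"
  define B where "B = q1*s2-q2*s1"
  note c = cramer0(1)[where qx=q0 and qy=q1 and qz=q2 and px=p0 and py=p1 and pz=p2 and sx=s0 and sy=s1 and sz=s2]
    cramer0(2,3)[where qy=q1 and qz=q2 and py=p1 and pz=p2 and sy=s1 and sz=s2]
  have e: "w*s0 = A*q0 + B*p0" "w*s1 = A*q1 + B*p1" "w*s2 = A*q2 + B*p2"
    using c D unfolding w_def A_def B_def by simp_all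
  have wn: "w \<noteq> 0" using w w_def by simp
  have "s0 = (A/w)*q0 + (B/w)*p0" "s1 = (A/w)*q1 + (B/w)*p1" "s2 = (A/w)*q2 + (B/w)*p2"
    using e wn by (simp_all add: field_simps)
  then show ?thesis by blast
qed

lemma det_zero:
  fixes q0 q1 q2 p0 p1 p2 s0 s1 s2 a b c :: "'a::field"
  assumes "(a,b,c) \<noteq> (0,0,0)" "a*q0+b*q1+c*q2 = 0" "a*p0+b*p1+c*p2 = 0" "a*s0+b*s1+c*s2 = 0"
  shows "q0*(p1*s2 - p2*s1) - q1*(p0*s2 - p2*s0) + q2*(p0*s1 - p1*s0) = 0"
proof -
  let ?D = "q0*(p1*s2 - p2*s1) - q1*(p0*s2 - p2*s0) + q2*(p0*s1 - p1*s0)"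
  have "?D*a = 0" "?D*b = 0" "?D*c = 0"
    using detn[where qx=q0 and qy=q1 and qz=q2 and px=p0 and py=p1 and pz=p2 and sx=s0 and sy=s1 and sz=s2 and a=a and b=b and c=c] assms(2-4) by simp_all
  then show ?thesis using assms(1) by auto
qed

lemma span2:
  fixes q0 q1 q2 p0 p1 p2 s0 s1 s2 a b c :: "'a::field"
  assumes "(a,b,c) \<noteq> (0,0,0)" "a*q0+b*q1+c*q2 = 0" "a*p0+b*p1+c*p2 = 0" "a*s0+b*s1+c*s2 = 0"
    and "(q1*p2-q2*p1, q2*p0-q0*p2, q0*p1-q1*p0) \<noteq> (0,0,0)"
  shows "\<exists>\<alpha> \<beta>. s0 = \<alpha>*q0 + \<beta>*p0 \<and> s1 = \<alpha>*q1 + \<beta>*p1 \<and> s2 = \<alpha>*q2 + \<beta>*p2"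
proof -
  have D: "q0*(p1*s2 - p2*s1) - q1*(p0*s2 - p2*s0) + q2*(p0*s1 - p1*s0) = 0"
    by (rule det_zero[OF assms(1-4)])
  consider "q1*p2-q2*p1 \<noteq> 0" | "q2*p0-q0*p2 \<noteq> 0" | "q0*p1-q1*p0 \<noteq> 0" using assms(5) by auto
  then show ?thesis
  proof cases
    case 1 then show ?thesis using span_w0[OF D] by blast
  next
    case 2
    have D': "q1*(p2*s0 - p0*s2) - q2*(p1*s0 - p0*s1) + q0*(p1*s2 - p2*s1) = 0"
      using D by (simp add: algebra_simps)
    from span_w0[OF D' 2] show ?thesis by blast
  next
    case 3
    have D': "q2*(p0*s1 - p1*s0) - q0*(p2*s1 - p1*s2) + q1*(p2*s0 - p0*s2) = 0"
      using D by (simp add: algebra_simps)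
    from span_w0[OF D' 3] show ?thesis by blast
  qed
qed

lemma cross_nz:
  fixes q0 q1 q2 p0 p1 p2 :: "'a::field"
  assumes "(q0,q1,q2) \<in> proj_points" "(p0,p1,p2) \<in> proj_points" "(q0,q1,q2) \<noteq> (p0,p1,p2)"
  shows "(q1*p2-q2*p1, q2*p0-q0*p2, q0*p1-q1*p0) \<noteq> (0,0,0)"
  using assms by (auto simp: proj_points_def)

lemma prop_eq:
  fixes a0 a1 a2 b0 b1 b2 c :: "'a::field"
  assumes "(a0,a1,a2) \<in> proj_points" "(b0,b1,b2) \<in> proj_points"
    "a0 = c*b0" "a1 = c*b1" "a2 = c*b2"
  shows "(a0,a1,a2) = (b0,b1,b2)"
  using assms by (auto simp: proj_points_def)

lemma normalize_ex:
  fixes x y z :: "'a::field"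
  assumes "(x,y,z) \<noteq> (0,0,0)"
  shows "\<exists>c n0 n1 n2. (n0,n1,n2) \<in> proj_points \<and> x = c*n0 \<and> y = c*n1 \<and> z = c*n2"
proof (cases "x = 0")
  case False then show ?thesis
    by (intro exI[of _ x] exI[of _ 1] exI[of _ "y/x"] exI[of _ "z/x"]) (auto simp: proj_points_def)
next
  case x: True
  show ?thesis
  proof (cases "y = 0")
    case False then show ?thesis using x
      by (intro exI[of _ y] exI[of _ 0] exI[of _ 1] exI[of _ "z/y"]) (auto simp: proj_points_def)
  next
    case True then show ?thesis using x assms
      by (intro exI[of _ z] exI[of _ 0] exI[of _ 0] exI[of _ 1]) (auto simp: proj_points_def)
  qed
qed

lemma eval3_scale:
  assumes "homog3 d F"
  shows "eval3 F (c*x, c*y, c*z) = c^d * eval3 F (x,y,z)"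
proof -
  have t: "Poly_Mapping.lookup F m * (c * x) ^ Poly_Mapping.lookup m 0 * (c * y) ^ Poly_Mapping.lookup m 1 * (c * z) ^ Poly_Mapping.lookup m 2 =
         c ^ d * (Poly_Mapping.lookup F m * x ^ Poly_Mapping.lookup m 0 * y ^ Poly_Mapping.lookup m 1 * z ^ Poly_Mapping.lookup m 2)"
    if "m \<in> Poly_Mapping.keys F" for m
  proof -
    from that have "Poly_Mapping.lookup m 0 + Poly_Mapping.lookup m 1 + Poly_Mapping.lookup m 2 = d"
      using assms unfolding homog3_def by blast
    then have cd: "c^d = c^(Poly_Mapping.lookup m 0) * c^(Poly_Mapping.lookup m 1) * c^(Poly_Mapping.lookup m 2)"
      by (metis power_add)
    show ?thesis unfolding cd by (simp add: power_mult_distrib mult_ac)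
  qed
  have "eval3 F (c*x, c*y, c*z) = (\<Sum>m\<in>Poly_Mapping.keys F. c^d * (Poly_Mapping.lookup F m * x ^ Poly_Mapping.lookup m 0 * y ^ Poly_Mapping.lookup m 1 * z ^ Poly_Mapping.lookup m 2))"
    unfolding eval3_def prod.case by (rule sum.cong[OF refl]) (rule t)
  also have "\<dots> = c^d * eval3 F (x,y,z)" unfolding eval3_def by (simp add: sum_distrib_left)
  finally show ?thesis .
qed

lemma coeff_mult_1: "coeff (p * q) 1 = coeff p 0 * coeff q 1 + coeff p 1 * coeff q 0"
  by (simp add: coeff_mult atMost_Suc add.commute)

lemma coeff_lin_pow1: "coeff ([:a, b:] ^ n) 1 = of_nat n * a ^ (n - 1) * b"
proof (induction n)
  case 0 then show ?case by simp
next
  case (Suc n)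
  show ?case
  proof (cases n)
    case 0 then show ?thesis by (simp add: coeff_mult_1)
  next
    case (Suc k)
    then show ?thesis using Suc.IH
      by (simp add: coeff_mult_1 coeff_0_power algebra_simps)
  qed
qed

definition Hp :: "'a::field mpoly3 \<Rightarrow> 'a \<Rightarrow> 'a \<Rightarrow> 'a \<Rightarrow> 'a \<Rightarrow> 'a \<Rightarrow> 'a \<Rightarrow> 'a poly" where
  "Hp F x0 x1 x2 y0 y1 y2 = (\<Sum>m\<in>Poly_Mapping.keys F. smult (Poly_Mapping.lookup F m)
      ([:x0, y0:] ^ Poly_Mapping.lookup m 0 * [:x1, y1:] ^ Poly_Mapping.lookup m 1 * [:x2, y2:] ^ Poly_Mapping.lookup m 2))"

definition pa :: "'a::field mpoly3 \<Rightarrow> nat \<Rightarrow> 'a \<Rightarrow> 'a \<Rightarrow> 'a \<Rightarrow> 'a" where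
  "pa F i x0 x1 x2 = (\<Sum>m\<in>Poly_Mapping.keys F. Poly_Mapping.lookup F m *
     (if i = 0 then of_nat (Poly_Mapping.lookup m 0) * x0 ^ (Poly_Mapping.lookup m 0 - 1) * x1 ^ Poly_Mapping.lookup m 1 * x2 ^ Poly_Mapping.lookup m 2
      else if i = 1 then x0 ^ Poly_Mapping.lookup m 0 * (of_nat (Poly_Mapping.lookup m 1) * x1 ^ (Poly_Mapping.lookup m 1 - 1)) * x2 ^ Poly_Mapping.lookup m 2
      else x0 ^ Poly_Mapping.lookup m 0 * x1 ^ Poly_Mapping.lookup m 1 * (of_nat (Poly_Mapping.lookup m 2) * x2 ^ (Poly_Mapping.lookup m 2 - 1))))"

lemma poly_Hp: "poly (Hp F x0 x1 x2 y0 y1 y2) s = eval3 F (x0 + s*y0, x1 + s*y1, x2 + s*y2)"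
  by (simp add: Hp_def eval3_def poly_sum mult_ac)

lemma degree_Hp:
  assumes "homog3 d F" shows "degree (Hp F x0 x1 x2 y0 y1 y2) \<le> d"
  unfolding Hp_def
proof (rule degree_sum_le)
  show "finite (Poly_Mapping.keys F)" by simp
  fix m assume "m \<in> Poly_Mapping.keys F"
  then have d: "Poly_Mapping.lookup m 0 + Poly_Mapping.lookup m 1 + Poly_Mapping.lookup m 2 = d"
    using assms unfolding homog3_def by blast
  have l: "degree ([:a, b:] ^ k) \<le> k" for a b :: 'a and k
  proof -
    have "degree [:a, b:] \<le> 1" by simp
    then have "degree [:a, b:] * k \<le> 1 * k" by (rule mult_le_mono1)
    from order_trans[OF degree_power_le[of "[:a,b:]" k] this] show ?thesis by simp
  qed
  have "degree ([:x0, y0:] ^ Poly_Mapping.lookup m 0 * [:x1, y1:] ^ Poly_Mapping.lookup m 1 * [:x2, y2:] ^ Poly_Mapping.lookup m 2)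
     \<le> Poly_Mapping.lookup m 0 + Poly_Mapping.lookup m 1 + Poly_Mapping.lookup m 2"
    by (meson add_mono degree_mult_le l order.trans)
  then show "degree (smult (Poly_Mapping.lookup F m) ([:x0, y0:] ^ Poly_Mapping.lookup m 0 * [:x1, y1:] ^ Poly_Mapping.lookup m 1 * [:x2, y2:] ^ Poly_Mapping.lookup m 2)) \<le> d"
    using d degree_smult_le order.trans by metis
qed

lemma coeff1_prod: "coeff ([:x0,y0:]^a * [:x1,y1:]^b * [:x2,y2:]^c) 1 =
   y0*(of_nat a * x0^(a-1) * x1^b * x2^c) + y1 * (x0^a*(of_nat b * x1^(b-1))*x2^c) + y2*(x0^a*x1^b*(of_nat c*x2^(c-1)))"
  unfolding coeff_mult_1 coeff_mult_0 coeff_0_power coeff_lin_pow1 by (simp add: algebra_simps)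

lemma coeff1_Hp: "coeff (Hp F x0 x1 x2 y0 y1 y2) 1 = y0 * pa F 0 x0 x1 x2 + y1 * pa F 1 x0 x1 x2 + y2 * pa F 2 x0 x1 x2"
proof -
  have "coeff (Hp F x0 x1 x2 y0 y1 y2) 1 = (\<Sum>m\<in>Poly_Mapping.keys F. Poly_Mapping.lookup F m *
     (y0*(of_nat (Poly_Mapping.lookup m 0) * x0^(Poly_Mapping.lookup m 0-1) * x1^Poly_Mapping.lookup m 1 * x2^Poly_Mapping.lookup m 2)
    + y1 * (x0^Poly_Mapping.lookup m 0*(of_nat (Poly_Mapping.lookup m 1) * x1^(Poly_Mapping.lookup m 1-1))*x2^Poly_Mapping.lookup m 2)
    + y2*(x0^Poly_Mapping.lookup m 0*x1^Poly_Mapping.lookup m 1*(of_nat (Poly_Mapping.lookup m 2)*x2^(Poly_Mapping.lookup m 2-1)))))"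
    unfolding Hp_def coeff_sum coeff_smult coeff1_prod ..
  also have "\<dots> = y0 * pa F 0 x0 x1 x2 + y1 * pa F 1 x0 x1 x2 + y2 * pa F 2 x0 x1 x2"
    unfolding pa_def by (simp add: sum_distrib_left sum.distrib[symmetric] algebra_simps)
  finally show ?thesis .
qed

lemma xpow: "x * (of_nat k * x ^ (k - 1)) = of_nat k * x ^ k" for x :: "'a::comm_ring_1"
  by (cases k) auto

lemma aux:
  fixes x0 x1 x2 k0 k1 k2 a a0 b b0 c c0 f :: "'a::comm_ring_1"
  assumes "x0*(k0*a0) = k0*a" "x1*(k1*b0) = k1*b" "x2*(k2*c0)=k2*c"
  shows "x0*(f*(k0*a0*b*c)) + x1*(f*(a*(k1*b0)*c)) + x2*(f*(a*b*(k2*c0))) = (k0+k1+k2)*(f*a*b*c)"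
proof -
  have "x0*(f*(k0*a0*b*c)) + x1*(f*(a*(k1*b0)*c)) + x2*(f*(a*b*(k2*c0)))
     = f*b*c*(x0*(k0*a0)) + f*a*c*(x1*(k1*b0)) + f*a*b*(x2*(k2*c0))"
    by (simp add: algebra_simps)
  also have "\<dots> = (k0+k1+k2)*(f*a*b*c)" unfolding assms by (simp add: algebra_simps)
  finally show ?thesis .
qed

lemma euler_pa:
  assumes "homog3 d F"
  shows "x0 * pa F 0 x0 x1 x2 + x1 * pa F 1 x0 x1 x2 + x2 * pa F 2 x0 x1 x2 = of_nat d * eval3 F (x0, x1, x2)"
proof -
  have t: "x0 * (Poly_Mapping.lookup F m * (of_nat (Poly_Mapping.lookup m 0) * x0 ^ (Poly_Mapping.lookup m 0 - 1) * x1 ^ Poly_Mapping.lookup m 1 * x2 ^ Poly_Mapping.lookup m 2))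
    + x1 * (Poly_Mapping.lookup F m * (x0 ^ Poly_Mapping.lookup m 0 * (of_nat (Poly_Mapping.lookup m 1) * x1 ^ (Poly_Mapping.lookup m 1 - 1)) * x2 ^ Poly_Mapping.lookup m 2))
    + x2 * (Poly_Mapping.lookup F m * (x0 ^ Poly_Mapping.lookup m 0 * x1 ^ Poly_Mapping.lookup m 1 * (of_nat (Poly_Mapping.lookup m 2) * x2 ^ (Poly_Mapping.lookup m 2 - 1))))
    = of_nat d * (Poly_Mapping.lookup F m * x0 ^ Poly_Mapping.lookup m 0 * x1 ^ Poly_Mapping.lookup m 1 * x2 ^ Poly_Mapping.lookup m 2)"
    if "m \<in> Poly_Mapping.keys F" for m
  proof -
    from that have d: "Poly_Mapping.lookup m 0 + Poly_Mapping.lookup m 1 + Poly_Mapping.lookup m 2 = d"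
      using assms unfolding homog3_def by blast
    have e0: "x0 * (of_nat (Poly_Mapping.lookup m 0) * x0 ^ (Poly_Mapping.lookup m 0 - 1)) = of_nat (Poly_Mapping.lookup m 0) * x0 ^ Poly_Mapping.lookup m 0"
      by (rule xpow)
    have e1: "x1 * (of_nat (Poly_Mapping.lookup m 1) * x1 ^ (Poly_Mapping.lookup m 1 - 1)) = of_nat (Poly_Mapping.lookup m 1) * x1 ^ Poly_Mapping.lookup m 1"
      by (rule xpow)
    have e2: "x2 * (of_nat (Poly_Mapping.lookup m 2) * x2 ^ (Poly_Mapping.lookup m 2 - 1)) = of_nat (Poly_Mapping.lookup m 2) * x2 ^ Poly_Mapping.lookup m 2"
      by (rule xpow)
    have "of_nat d = (of_nat (Poly_Mapping.lookup m 0) + of_nat (Poly_Mapping.lookup m 1) + of_nat (Poly_Mapping.lookup m 2) :: 'a)"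
      using d by (metis of_nat_add)
    then show ?thesis
      using aux[OF e0 e1 e2, of "Poly_Mapping.lookup F m"] by simp
  qed
  have p0: "pa F 0 x0 x1 x2 = (\<Sum>m\<in>Poly_Mapping.keys F. Poly_Mapping.lookup F m * (of_nat (Poly_Mapping.lookup m 0) * x0 ^ (Poly_Mapping.lookup m 0 - 1) * x1 ^ Poly_Mapping.lookup m 1 * x2 ^ Poly_Mapping.lookup m 2))"
    by (simp add: pa_def)
  have p1: "pa F 1 x0 x1 x2 = (\<Sum>m\<in>Poly_Mapping.keys F. Poly_Mapping.lookup F m * (x0 ^ Poly_Mapping.lookup m 0 * (of_nat (Poly_Mapping.lookup m 1) * x1 ^ (Poly_Mapping.lookup m 1 - 1)) * x2 ^ Poly_Mapping.lookup m 2))"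
    by (simp add: pa_def)
  have p2: "pa F 2 x0 x1 x2 = (\<Sum>m\<in>Poly_Mapping.keys F. Poly_Mapping.lookup F m * (x0 ^ Poly_Mapping.lookup m 0 * x1 ^ Poly_Mapping.lookup m 1 * (of_nat (Poly_Mapping.lookup m 2) * x2 ^ (Poly_Mapping.lookup m 2 - 1))))"
    by (simp add: pa_def)
  show ?thesis
    unfolding p0 p1 p2 eval3_def prod.case sum_distrib_left sum.distrib[symmetric]
    by (rule sum.cong[OF refl]) (rule t)
qed

lemma coeff1_vanish:
  fixes H :: "'a::{field,finite} poly"
  assumes deg: "degree H \<le> card (UNIV::'a set) - 1" and q3: "card (UNIV::'a set) \<ge> 3"
    and van: "\<And>s. s \<noteq> 0 \<Longrightarrow> poly H s = 0"
  shows "coeff H 1 = 0"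
proof -
  define d where "d = card (UNIV::'a set) - 1"
  have d2: "d \<ge> 2" using q3 unfolding d_def by simp
  define c where "c = poly H 0"
  define K where "K = H - smult c (1 - monom 1 d)"
  have z: "poly K s = 0" for s
  proof (cases "s = 0")
    case True then show ?thesis using d2 by (simp add: K_def c_def poly_monom)
  next
    case False
    then have "s ^ d = 1" unfolding d_def by (rule ff_pow)
    then show ?thesis using van[OF False] by (simp add: K_def poly_monom)
  qed
  have degK: "degree K \<le> d"
    unfolding K_def
  proof (rule degree_diff_le)
    show "degree H \<le> d" using deg d_def by simp
    have "degree (1 - monom (1::'a) d) \<le> d"
      by (rule degree_diff_le) (use d2 in \<open>simp_all add: degree_monom_le\<close>)
    then show "degree (smult c (1 - monom 1 d)) \<le> d" using degree_smult_le order.trans by blast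
  qed
  have "K = 0"
  proof (rule ccontr)
    assume "K \<noteq> 0"
    then have "card {x. poly K x = 0} \<le> degree K" by (rule card_poly_roots_bound)
    moreover have "{x. poly K x = 0} = UNIV" using z by auto
    ultimately have "card (UNIV::'a set) \<le> d" using degK by simp
    then show False using q3 unfolding d_def by simp
  qed
  then have "coeff K 1 = 0" by simp
  then show ?thesis using d2 by (simp add: K_def coeff_monom)
qed

lemma zero_notin_pp: "((0::'a::field),(0::'a),(0::'a)) \<notin> proj_points"
  by (simp add: proj_points_def)

lemma key:
  fixes F :: "'a::{field,finite} mpoly3"
  assumes hom: "homog3 d F"
  and lne: "(a,b,c) \<noteq> (0,0,0)"
  and Qp: "(q0,q1,q2) \<in> proj_line a b c" and Pp: "(p0,p1,p2) \<in> proj_line a b c"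
  and QP: "(q0,q1,q2) \<noteq> (p0,p1,p2)"
  and QZ: "eval3 F (q0,q1,q2) \<noteq> 0" and PZ: "eval3 F (p0,p1,p2) \<noteq> 0"
  and cnt: "card (proj_line a b c \<inter> rat_points F) = card (UNIV::'a set) - 1"
  and s: "s \<noteq> 0"
  shows "eval3 F (q0 + s*p0, q1 + s*p1, q2 + s*p2) = 0"
proof -
  let ?l = "proj_line a b c"
  let ?Q = "(q0,q1,q2)" and ?P = "(p0,p1,p2)"
  let ?T = "?l - {?Q, ?P}"
  have Qpp: "?Q \<in> proj_points" and Qe: "a*q0+b*q1+c*q2 = 0" using Qp by (auto simp: proj_line_def)
  have Ppp: "?P \<in> proj_points" and Pe: "a*p0+b*p1+c*p2 = 0" using Pp by (auto simp: proj_line_def)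
  have cr: "(q1*p2-q2*p1, q2*p0-q0*p2, q0*p1-q1*p0) \<noteq> (0,0,0)" by (rule cross_nz[OF Qpp Ppp QP])
  have rep: "\<exists>t. t \<noteq> 0 \<and> (\<exists>k. fst S = k*(q0+t*p0) \<and> fst (snd S) = k*(q1+t*p1) \<and> snd (snd S) = k*(q2+t*p2))"
    if "S \<in> ?T" for S
  proof -
    obtain s0 s1 s2 where S: "S = (s0,s1,s2)" by (cases S) auto
    have Spp: "(s0,s1,s2) \<in> proj_points" and Se: "a*s0+b*s1+c*s2 = 0"
      using that S by (auto simp: proj_line_def)
    have SQ: "(s0,s1,s2) \<noteq> ?Q" and SP: "(s0,s1,s2) \<noteq> ?P" using that S by auto
    obtain \<alpha> \<beta> where ab: "s0 = \<alpha>*q0 + \<beta>*p0" "s1 = \<alpha>*q1 + \<beta>*p1" "s2 = \<alpha>*q2 + \<beta>*p2"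
      using span2[OF lne Qe Pe Se cr] by blast
    have "\<alpha> \<noteq> 0"
    proof
      assume "\<alpha> = 0"
      then have "(s0,s1,s2) = ?P" using prop_eq[OF Spp Ppp, of \<beta>] ab by simp
      then show False using SP by simp
    qed
    moreover have "\<beta> \<noteq> 0"
    proof
      assume "\<beta> = 0"
      then have "(s0,s1,s2) = ?Q" using prop_eq[OF Spp Qpp, of \<alpha>] ab by simp
      then show False using SQ by simp
    qed
    ultimately show ?thesis
      by (intro exI[of _ "\<beta>/\<alpha>"] conjI exI[of _ \<alpha>]) (auto simp: S ab field_simps)
  qed
  then obtain g where g: "\<And>S. S \<in> ?T \<Longrightarrow> g S \<noteq> 0 \<and> (\<exists>k. fst S = k*(q0+g S*p0) \<and> fst (snd S) = k*(q1+g S*p1) \<and> snd (snd S) = k*(q2+g S*p2))"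
    by metis
  have inj: "inj_on g ?T"
  proof (rule inj_onI)
    fix S S' assume S: "S \<in> ?T" and S': "S' \<in> ?T" and gg: "g S = g S'"
    obtain k where k: "fst S = k*(q0+g S*p0)" "fst (snd S) = k*(q1+g S*p1)" "snd (snd S) = k*(q2+g S*p2)"
      using g[OF S] by blast
    obtain k' where k': "fst S' = k'*(q0+g S*p0)" "fst (snd S') = k'*(q1+g S*p1)" "snd (snd S') = k'*(q2+g S*p2)"
      using g[OF S'] gg by auto
    obtain s0 s1 s2 where Se: "S = (s0,s1,s2)" by (cases S) auto
    obtain t0 t1 t2 where Se': "S' = (t0,t1,t2)" by (cases S') auto
    have Spp: "(s0,s1,s2) \<in> proj_points" using S Se by (auto simp: proj_line_def)
    have Spp': "(t0,t1,t2) \<in> proj_points" using S' Se' by (auto simp: proj_line_def)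
    have "k' \<noteq> 0" using Spp' k' Se' zero_notin_pp by auto
    then have "s0 = (k/k')*t0" "s1 = (k/k')*t1" "s2 = (k/k')*t2" using k k' Se Se' by auto
    from prop_eq[OF Spp Spp' this] show "S = S'" using Se Se' by simp
  qed
  have fin: "finite ?T" by simp
  have "card ?T \<le> card (UNIV - {0::'a})"
    by (rule card_inj_on_le[OF inj]) (use g in auto)
  also have "\<dots> = card (UNIV::'a set) - 1" by (simp add: card_Diff_subset)
  finally have cT: "card ?T \<le> card (?l \<inter> rat_points F)" using cnt by simp
  have sub: "?l \<inter> rat_points F \<subseteq> ?T" using QZ PZ by (auto simp: rat_points_def)
  have TX: "?l \<inter> rat_points F = ?T" by (rule card_seteq[OF fin sub cT])
  have Vnz: "(q0 + s*p0, q1 + s*p1, q2 + s*p2) \<noteq> (0,0,0)"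
  proof
    assume "(q0 + s*p0, q1 + s*p1, q2 + s*p2) = (0,0,0)"
    then have "q0 = (-s)*p0" "q1 = (-s)*p1" "q2 = (-s)*p2" by (auto simp: algebra_simps add_eq_0_iff)
    from prop_eq[OF Qpp Ppp this] QP show False by simp
  qed
  obtain k n0 n1 n2 where N: "(n0,n1,n2) \<in> proj_points" "q0 + s*p0 = k*n0" "q1 + s*p1 = k*n1" "q2 + s*p2 = k*n2"
    using normalize_ex[OF Vnz] by blast
  have knz: "k \<noteq> 0" using N Vnz by auto
  have "k * (a*n0+b*n1+c*n2) = a*(k*n0)+b*(k*n1)+c*(k*n2)" by (simp add: algebra_simps)
  also have "\<dots> = a*(q0 + s*p0)+b*(q1 + s*p1)+c*(q2 + s*p2)" using N by simp
  also have "\<dots> = (a*q0+b*q1+c*q2) + s*(a*p0+b*p1+c*p2)" by (simp add: algebra_simps)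
  finally have "k * (a*n0+b*n1+c*n2) = (a*q0+b*q1+c*q2) + s*(a*p0+b*p1+c*p2)" .
  then have "a*n0+b*n1+c*n2 = 0" using Qe Pe knz by simp
  then have Nl: "(n0,n1,n2) \<in> ?l" using N by (simp add: proj_line_def)
  have NQ: "(n0,n1,n2) \<noteq> ?Q"
  proof
    assume "(n0,n1,n2) = ?Q"
    then have "p0 = ((k-1)/s)*q0" "p1 = ((k-1)/s)*q1" "p2 = ((k-1)/s)*q2" using N s by (auto simp: field_simps)
    from prop_eq[OF Ppp Qpp this] QP show False by simp
  qed
  have NP: "(n0,n1,n2) \<noteq> ?P"
  proof
    assume "(n0,n1,n2) = ?P"
    then have "q0 = (k-s)*p0" "q1 = (k-s)*p1" "q2 = (k-s)*p2" using N by (auto simp: algebra_simps)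
    from prop_eq[OF Qpp Ppp this] QP show False by simp
  qed
  have "(n0,n1,n2) \<in> rat_points F" using Nl NQ NP TX by blast
  then have "eval3 F (n0,n1,n2) = 0" by (simp add: rat_points_def)
  then show ?thesis using N eval3_scale[OF hom, of k n0 n1 n2] by simp
qed

theorem corollary3p9:
  fixes F :: "('a::{field, finite}) mpoly3" and Q :: "'a \<times> 'a \<times> 'a"
  assumes "card (UNIV :: 'a set) \<ge> 5"
    and "homog3 (card (UNIV :: 'a set) - 1) F"
    and "no_linear_components F"
    and "card (rat_points F) = (card (UNIV :: 'a set) - 1)^2"
    and "Q \<in> Zset F"
    and "psi F (card (UNIV :: 'a set) - 1) Q \<ge> 2"
  shows "\<exists>L \<in> proj_lines.
     (\<Union>l \<in> {l \<in> proj_lines. Q \<in> l \<and> card (l \<inter> rat_points F) = card (UNIV :: 'a set) - 1}.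
        (l - {Q}) \<inter> Zset F) \<subseteq> L"
proof -
  note q5 = assms(1) and hom = assms(2) and QZs = assms(5)
  obtain q0 q1 q2 where Qe: "Q = (q0,q1,q2)" by (cases Q) auto
  let ?d = "card (UNIV :: 'a set) - 1"
  define a0 where "a0 = pa F 0 q0 q1 q2"
  define a1 where "a1 = pa F 1 q0 q1 q2"
  define a2 where "a2 = pa F 2 q0 q1 q2"
  have Qpp: "(q0,q1,q2) \<in> proj_points" and FQ: "eval3 F (q0,q1,q2) \<noteq> 0"
    using QZs Qe by (auto simp: Zset_def rat_points_def)
  have dm1: "(of_nat ?d :: 'a) = -1"
    using ff_char[where 'a='a] q5 by (simp add: of_nat_diff)
  have eu: "q0*a0 + q1*a1 + q2*a2 = - eval3 F (q0,q1,q2)"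
    using euler_pa[OF hom, of q0 q1 q2] dm1 unfolding a0_def a1_def a2_def by simp
  have anz: "(a0,a1,a2) \<noteq> (0,0,0)"
  proof
    assume "(a0,a1,a2) = (0,0,0)"
    then show False using eu FQ by simp
  qed
  have Lin: "proj_line a0 a1 a2 \<in> proj_lines" using anz unfolding proj_lines_def by blast
  show ?thesis
  proof (rule bexI[OF _ Lin], rule subsetI)
    fix x assume "x \<in> (\<Union>l \<in> {l \<in> proj_lines. Q \<in> l \<and> card (l \<inter> rat_points F) = ?d}. (l - {Q}) \<inter> Zset F)"
    then obtain l where l: "l \<in> proj_lines" "Q \<in> l" "card (l \<inter> rat_points F) = ?d"
      and xl: "x \<in> l" "x \<noteq> Q" "x \<in> Zset F" by blast
    obtain a b c where lab: "l = proj_line a b c" "(a,b,c) \<noteq> (0,0,0)" using l(1) unfolding proj_lines_def by blast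
    obtain p0 p1 p2 where xe: "x = (p0,p1,p2)" by (cases x) auto
    have Ppp: "(p0,p1,p2) \<in> proj_points" and FP: "eval3 F (p0,p1,p2) \<noteq> 0"
      using xl(3) xe by (auto simp: Zset_def rat_points_def)
    have van: "poly (Hp F q0 q1 q2 p0 p1 p2) s = 0" if "s \<noteq> 0" for s
      unfolding poly_Hp
      by (rule key[OF hom lab(2)]) (use l lab xl xe Qe FQ FP that in auto)
    have "coeff (Hp F q0 q1 q2 p0 p1 p2) 1 = 0"
      by (rule coeff1_vanish[OF degree_Hp[OF hom]]) (use q5 van in auto)
    then have "p0*a0 + p1*a1 + p2*a2 = 0" unfolding coeff1_Hp a0_def a1_def a2_def .
    then show "x \<in> proj_line a0 a1 a2" using Ppp xe by (simp add: proj_line_def mult.commute)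
  qed
qed

end
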